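(* Let $(T,A,m|_A)$ be a nonsingular open dynamical system with $m(A_\infty)=0$, fix $\alpha\in(0,1)$ and a finite measurable partition $\{B_1,\dots,B_n\}$ of $A$, and let $\hat A$, $\hat C$, $\hat{\mathbf c}$ and $(\hat D_{n,\alpha})$ be as in the context. If $x_1,\dots,x_n$ are positive numbers satisfying $$x_i^{1+\alpha}=\alpha\,\frac{\sum_j\hat C_{ij}x_j+\hat c_i}{\sum_k\hat C_{ki}x_k^{-\alpha}}\qquad(1\le i\le n),$$ and $\lambda_0^*\in\mathbb R$ satisfies $e^{\alpha\lambda_0^*-1}\sum_{i,j}\hat C_{ij}x_jx_i^{-\alpha}=\alpha$, then $\lambda^*=(\lambda_0^*,\lambda_1^*,\dots,\lambda_n^* )$ with $\lambda_i^*:=\log(x_i)-\lambda_0^*$ ($1\le i\le n$) solves $(\hat D_{n,\alpha})$.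
   Context: Let $(X,m)$ be a measure space, $A\subsetneq X$ measurable and $T:A\to X$ measurable such that: $H_0:=T(A)\setminus A$ is measurable; $m(A\cap T^{-1}H_0)>0$; $m(E)>0$ whenever $E\subseteq X$ is measurable with $m(T^{-1}E)>0$; and $T$ is locally finite-to-one (a nonsingular open dynamical system). Preimages are taken in $A$. $A_n=\{x:x,T(x),\dots,T^n(x)\in A\}$, $A_\infty=\bigcap_nA_n$, $H_1=A\setminus A_1$. $\mathbf 1_{A_1}\psi\circ T$ is $\psi\circ T$ on $A_1$ and $0$ elsewhere in $A$. With $\psi_j=\mathbf 1_{B_j}$ define $\mathcal M^*\lambda=\lambda_0\mathbf 1_{A_1}+\sum_{j=1}^n\lambda_j(\mathbf 1_{A_1}\psi_j\circ T-\alpha\psi_j)$ for $\lambda\in\mathbb R^{n+1}$; the reduced domain $\hat A$ is $A$ with the support of every $\mathcal M^*\lambda$ having $\lambda_0=0$ and $\mathcal M^*\lambda\le0$ $m$-a.e. removed (it is a union of partition sets $B_k$). Let $\hat m=m|_{\hat A}$, $\hat C_{kj}=\hat m(B_k\cap T^{-1}B_j)$ and $\hat c_k=\hat m(H_1\cap B_k)$. The problem $(\hat D_{n,\alpha})$ is: maximize over $\lambda\in\mathbb R^{n+1}$ $$\hat Q(\lambda)=\alpha\lambda_0-\int_{\hat A}\exp(\mathcal M^*\lambda-1)\,dm=\alpha\lambda_0-\sum_{j,k}\exp(\lambda_0-1+\lambda_j-\alpha\lambda_k)\hat C_{kj}-\sum_k\exp(-1-\alpha\lambda_k)\hat c_k.$$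 *)

theory Defs
  imports "HOL-Analysis.Analysis"
begin

text \<open>Nonsingular open dynamical system (T, A, m|A) inside the measure space (space M, M).
  T is a total HOL function, but only its values on A matter.\<close>
definition open_dyn_system :: "'a measure \<Rightarrow> 'a set \<Rightarrow> ('a \<Rightarrow> 'a) \<Rightarrow> bool" where
  "open_dyn_system M A T \<longleftrightarrow>
     A \<in> sets M \<and> A \<subset> space M \<and>
     T \<in> measurable (restrict_space M A) M \<and>
     T ` A - A \<in> sets M \<and>
     emeasure M (A \<inter> T -` (T ` A - A)) > 0 \<and>
     (\<forall>E \<in> sets M. emeasure M (A \<inter> T -` E) > 0 \<longrightarrow> emeasure M E > 0) \<and>
     (\<forall>y. finite (A \<inter> T -` {y}))"

definition An :: "('a \<Rightarrow> 'a) \<Rightarrow> 'a set \<Rightarrow> nat \<Rightarrow> 'a set" where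
  "An T A n = {x. \<forall>i\<le>n. (T ^^ i) x \<in> A}"

definition Ainf :: "('a \<Rightarrow> 'a) \<Rightarrow> 'a set \<Rightarrow> 'a set" where
  "Ainf T A = (\<Inter>n. An T A n)"

definition H1 :: "('a \<Rightarrow> 'a) \<Rightarrow> 'a set \<Rightarrow> 'a set" where
  "H1 T A = A - An T A 1"

text \<open>M^* lambda, lambda = (lambda_0,...,lambda_n) encoded as nat => real, psi_j = indicator of B j.\<close>
definition Mstar :: "('a \<Rightarrow> 'a) \<Rightarrow> 'a set \<Rightarrow> (nat \<Rightarrow> 'a set) \<Rightarrow> nat \<Rightarrow> real
    \<Rightarrow> (nat \<Rightarrow> real) \<Rightarrow> 'a \<Rightarrow> real" where
  "Mstar T A B n \<alpha> l x =
     (if x \<in> An T A 1 then l 0 else 0) +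
     (\<Sum>j\<in>{1..n}. l j * ((if x \<in> An T A 1 then indicator (B j) (T x) else 0)
                          - \<alpha> * indicator (B j) x))"

definition Ahat :: "'a measure \<Rightarrow> ('a \<Rightarrow> 'a) \<Rightarrow> 'a set \<Rightarrow> (nat \<Rightarrow> 'a set) \<Rightarrow> nat \<Rightarrow> real \<Rightarrow> 'a set" where
  "Ahat M T A B n \<alpha> = A - \<Union>{ {x \<in> A. Mstar T A B n \<alpha> l x \<noteq> 0} | l.
        l 0 = 0 \<and> (AE x in M. x \<in> A \<longrightarrow> Mstar T A B n \<alpha> l x \<le> 0) }"

definition Chat_set :: "'a measure \<Rightarrow> ('a \<Rightarrow> 'a) \<Rightarrow> 'a set \<Rightarrow> (nat \<Rightarrow> 'a set) \<Rightarrow> nat \<Rightarrow> real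
    \<Rightarrow> nat \<Rightarrow> nat \<Rightarrow> 'a set" where
  "Chat_set M T A B n \<alpha> k j = Ahat M T A B n \<alpha> \<inter> B k \<inter> (A \<inter> T -` B j)"

definition chat_set :: "'a measure \<Rightarrow> ('a \<Rightarrow> 'a) \<Rightarrow> 'a set \<Rightarrow> (nat \<Rightarrow> 'a set) \<Rightarrow> nat \<Rightarrow> real
    \<Rightarrow> nat \<Rightarrow> 'a set" where
  "chat_set M T A B n \<alpha> k = Ahat M T A B n \<alpha> \<inter> H1 T A \<inter> B k"

definition Chat where
  "Chat M T A B n \<alpha> k j = measure M (Chat_set M T A B n \<alpha> k j)"

definition chat where
  "chat M T A B n \<alpha> k = measure M (chat_set M T A B n \<alpha> k)"

definition Qhat :: "'a measure \<Rightarrow> ('a \<Rightarrow> 'a) \<Rightarrow> 'a set \<Rightarrow> (nat \<Rightarrow> 'a set) \<Rightarrow> nat \<Rightarrow> real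
    \<Rightarrow> (nat \<Rightarrow> real) \<Rightarrow> real" where
  "Qhat M T A B n \<alpha> l =
     \<alpha> * l 0
     - (\<Sum>j\<in>{1..n}. \<Sum>k\<in>{1..n}. exp (l 0 - 1 + l j - \<alpha> * l k) * Chat M T A B n \<alpha> k j)
     - (\<Sum>k\<in>{1..n}. exp (- 1 - \<alpha> * l k) * chat M T A B n \<alpha> k)"

text \<open>lambda solves (hat D_{n,alpha}): it maximizes Qhat over R^{n+1}
  (only the coordinates 0..n of a function nat => real matter).\<close>
definition solves_Dhat where
  "solves_Dhat M T A B n \<alpha> l \<longleftrightarrow> (\<forall>\<mu>. Qhat M T A B n \<alpha> \<mu> \<le> Qhat M T A B n \<alpha> l)"

end

theory Submission
  imports Defs
begin

lemma core:
  fixes C :: "nat \<Rightarrow> nat \<Rightarrow> real" and c x :: "nat \<Rightarrow> real" and l0 \<alpha> :: real and \<mu> :: "nat \<Rightarrow> real"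
  assumes Cnn: "\<And>k j. 0 \<le> C k j" and cnn: "\<And>k. 0 \<le> c k"
    and x_pos: "\<forall>i\<in>{1..n}. 0 < x i"
    and x_eq: "\<forall>i\<in>{1..n}. x i powr (1 + \<alpha>) =
        \<alpha> * ((\<Sum>j\<in>{1..n}. C i j * x j) + c i)
          / (\<Sum>k\<in>{1..n}. C k i * x k powr (- \<alpha>))"
    and l0_eq: "exp (\<alpha> * l0 - 1) *
        (\<Sum>i\<in>{1..n}. \<Sum>j\<in>{1..n}. C i j * x j * x i powr (- \<alpha>)) = \<alpha>"
    and Qdef: "\<And>l. Q l = \<alpha> * l 0
     - (\<Sum>j\<in>{1..n}. \<Sum>k\<in>{1..n}. exp (l 0 - 1 + l j - \<alpha> * l k) * C k j)
     - (\<Sum>k\<in>{1..n}. exp (- 1 - \<alpha> * l k) * c k)"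
    and lam_def: "lam = (\<lambda>i. if i = 0 then l0 else ln (x i) - l0)"
  shows "Q \<mu> \<le> Q lam"
proof -
  define E where "E = exp (\<alpha> * l0 - 1)"
  define e where "e k j = E * x j * x k powr (-\<alpha>)" for k j
  define f where "f k = E * x k powr (-\<alpha>)" for k
  define d where "d i = \<mu> i - lam i" for i
  have tang: "exp b \<ge> exp a + exp a * (b - a)" for a b :: real
  proof -
    have "exp a * (1 + (b - a)) \<le> exp a * exp (b - a)"
      using exp_ge_add_one_self[of "b-a"] by (intro mult_left_mono) auto
    thus ?thesis by (simp add: algebra_simps exp_diff)
  qed
  have lam0: "lam 0 = l0" using lam_def by simp
  have lamx: "exp (lam 0 - 1 + lam j - \<alpha> * lam k) = e k j" if "j \<in> {1..n}" "k \<in> {1..n}" for j k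
  proof -
    have j: "j \<noteq> 0" "x j > 0" and k: "k \<noteq> 0" "x k > 0" using that x_pos by auto
    have "lam 0 - 1 + lam j - \<alpha> * lam k = (\<alpha> * l0 - 1) + ln (x j) + (-\<alpha>) * ln (x k)"
      using j k lam_def by (simp add: algebra_simps)
    hence "exp (lam 0 - 1 + lam j - \<alpha> * lam k) = exp (\<alpha> * l0 - 1) * exp (ln (x j)) * exp ((-\<alpha>) * ln (x k))"
      by (simp only: exp_add[symmetric])
    thus ?thesis using j k by (simp add: e_def E_def powr_def)
  qed
  have lamf: "exp (- 1 - \<alpha> * lam k) = f k" if "k \<in> {1..n}" for k
  proof -
    have k: "k \<noteq> 0" "x k > 0" using that x_pos by auto
    have "- 1 - \<alpha> * lam k = (\<alpha> * l0 - 1) + (-\<alpha>) * ln (x k)"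
      using k lam_def by (simp add: algebra_simps)
    hence "exp (- 1 - \<alpha> * lam k) = exp (\<alpha> * l0 - 1) * exp ((-\<alpha>) * ln (x k))"
      by (simp only: exp_add[symmetric])
    thus ?thesis using k by (simp add: f_def E_def powr_def)
  qed
  have dj: "(\<mu> 0 - 1 + \<mu> j - \<alpha> * \<mu> k) - (lam 0 - 1 + lam j - \<alpha> * lam k) = d 0 + d j - \<alpha> * d k" for j k
    by (simp add: d_def algebra_simps)
  have dk: "(- 1 - \<alpha> * \<mu> k) - (- 1 - \<alpha> * lam k) = - \<alpha> * d k" for k
    by (simp add: d_def algebra_simps)
  have S1: "(\<Sum>j\<in>{1..n}. \<Sum>k\<in>{1..n}. exp (\<mu> 0 - 1 + \<mu> j - \<alpha> * \<mu> k) * C k j)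
      \<ge> (\<Sum>j\<in>{1..n}. \<Sum>k\<in>{1..n}. (e k j + e k j * (d 0 + d j - \<alpha> * d k)) * C k j)"
    apply (intro sum_mono mult_right_mono Cnn)
    using tang[of "lam 0 - 1 + lam j - \<alpha> * lam k" "\<mu> 0 - 1 + \<mu> j - \<alpha> * \<mu> k" for j k]
      lamx dj by metis
  have S2: "(\<Sum>k\<in>{1..n}. exp (- 1 - \<alpha> * \<mu> k) * c k)
      \<ge> (\<Sum>k\<in>{1..n}. (f k + f k * (- \<alpha> * d k)) * c k)"
    apply (intro sum_mono mult_right_mono cnn)
    using tang[of "- 1 - \<alpha> * lam k" "- 1 - \<alpha> * \<mu> k" for k] lamf dk by metis
  have Qlam: "Q lam = \<alpha> * l0 - (\<Sum>j\<in>{1..n}. \<Sum>k\<in>{1..n}. e k j * C k j) - (\<Sum>k\<in>{1..n}. f k * c k)"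
    using Qdef[of lam] lamx lamf lam0 by simp
  have P: "(\<Sum>j\<in>{1..n}. \<Sum>k\<in>{1..n}. e k j * C k j) = \<alpha>"
  proof -
    have "(\<Sum>j\<in>{1..n}. \<Sum>k\<in>{1..n}. e k j * C k j) = (\<Sum>k\<in>{1..n}. \<Sum>j\<in>{1..n}. e k j * C k j)"
      by (rule sum.swap)
    also have "\<dots> = E * (\<Sum>i\<in>{1..n}. \<Sum>j\<in>{1..n}. C i j * x j * x i powr (- \<alpha>))"
      by (simp add: sum_distrib_left e_def mult_ac)
    finally show ?thesis using l0_eq E_def by simp
  qed
  have key: "\<alpha> * (\<Sum>j\<in>{1..n}. e m j * C m j) + \<alpha> * (f m * c m) - (\<Sum>k\<in>{1..n}. e k m * C k m) = 0"
    if m: "m \<in> {1..n}" for m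
  proof -
    have xm: "x m > 0" using m x_pos by auto
    define D where "D = (\<Sum>k\<in>{1..n}. C k m * x k powr (- \<alpha>))"
    have eq: "x m powr (1 + \<alpha>) = \<alpha> * ((\<Sum>j\<in>{1..n}. C m j * x j) + c m) / D"
      using x_eq m D_def by auto
    have "D \<noteq> 0"
    proof
      assume "D = 0" then have "x m powr (1 + \<alpha>) = 0" using eq by simp
      thus False using xm by simp
    qed
    hence eq2: "x m powr (1 + \<alpha>) * D = \<alpha> * ((\<Sum>j\<in>{1..n}. C m j * x j) + c m)"
      using eq by (simp add: field_simps)
    have xx: "x m = x m powr (-\<alpha>) * x m powr (1 + \<alpha>)"
      using xm by (simp add: powr_add[symmetric])
    have "(\<Sum>k\<in>{1..n}. e k m * C k m) = E * x m * D"
      by (simp add: D_def e_def sum_distrib_left mult_ac)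
    also have "\<dots> = E * x m powr (-\<alpha>) * (x m powr (1 + \<alpha>) * D)"
      by (subst xx) (simp add: mult_ac)
    also have "\<dots> = E * x m powr (-\<alpha>) * (\<alpha> * ((\<Sum>j\<in>{1..n}. C m j * x j) + c m))"
      by (simp add: eq2)
    also have "\<dots> = \<alpha> * (\<Sum>j\<in>{1..n}. e m j * C m j) + \<alpha> * (f m * c m)"
      by (simp add: e_def f_def sum_distrib_left algebra_simps)
    finally show ?thesis by simp
  qed
  have Qmu_le: "Q \<mu> \<le> \<alpha> * \<mu> 0 - (\<Sum>j\<in>{1..n}. \<Sum>k\<in>{1..n}. (e k j + e k j * (d 0 + d j - \<alpha> * d k)) * C k j)
      - (\<Sum>k\<in>{1..n}. (f k + f k * (- \<alpha> * d k)) * c k)"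
    using Qdef[of \<mu>] S1 S2 by linarith
  have expand1: "(\<Sum>j\<in>{1..n}. \<Sum>k\<in>{1..n}. (e k j + e k j * (d 0 + d j - \<alpha> * d k)) * C k j)
     = (\<Sum>j\<in>{1..n}. \<Sum>k\<in>{1..n}. e k j * C k j) + d 0 * (\<Sum>j\<in>{1..n}. \<Sum>k\<in>{1..n}. e k j * C k j)
       + (\<Sum>m\<in>{1..n}. d m * (\<Sum>k\<in>{1..n}. e k m * C k m))
       - \<alpha> * (\<Sum>m\<in>{1..n}. d m * (\<Sum>j\<in>{1..n}. e m j * C m j))"
  proof -
    have sw: "(\<Sum>j\<in>{1..n}. \<Sum>k\<in>{1..n}. e k j * C k j * d k) = (\<Sum>m\<in>{1..n}. d m * (\<Sum>j\<in>{1..n}. e m j * C m j))"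
      by (subst sum.swap) (simp add: sum_distrib_left mult_ac)
    have "(\<Sum>j\<in>{1..n}. \<Sum>k\<in>{1..n}. (e k j + e k j * (d 0 + d j - \<alpha> * d k)) * C k j)
      = (\<Sum>j\<in>{1..n}. \<Sum>k\<in>{1..n}. e k j * C k j + d 0 * (e k j * C k j) + d j * (e k j * C k j) - \<alpha> * (e k j * C k j * d k))"
      by (simp add: algebra_simps)
    also have "\<dots> = (\<Sum>j\<in>{1..n}. \<Sum>k\<in>{1..n}. e k j * C k j) + d 0 * (\<Sum>j\<in>{1..n}. \<Sum>k\<in>{1..n}. e k j * C k j)
       + (\<Sum>m\<in>{1..n}. d m * (\<Sum>k\<in>{1..n}. e k m * C k m))
       - \<alpha> * (\<Sum>j\<in>{1..n}. \<Sum>k\<in>{1..n}. e k j * C k j * d k)"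
      by (simp add: sum.distrib sum_subtractf sum_distrib_left)
    finally show ?thesis using sw by simp
  qed
  have expand2: "(\<Sum>k\<in>{1..n}. (f k + f k * (- \<alpha> * d k)) * c k)
     = (\<Sum>k\<in>{1..n}. f k * c k) - \<alpha> * (\<Sum>m\<in>{1..n}. d m * (f m * c m))"
    by (simp add: algebra_simps sum.distrib sum_subtractf sum_distrib_left)
  have zero: "(\<Sum>m\<in>{1..n}. d m * (\<Sum>k\<in>{1..n}. e k m * C k m)) - \<alpha> * (\<Sum>m\<in>{1..n}. d m * (\<Sum>j\<in>{1..n}. e m j * C m j))
      - \<alpha> * (\<Sum>m\<in>{1..n}. d m * (f m * c m)) = 0"
  proof -
    have "(\<Sum>m\<in>{1..n}. d m * (\<Sum>k\<in>{1..n}. e k m * C k m)) - \<alpha> * (\<Sum>m\<in>{1..n}. d m * (\<Sum>j\<in>{1..n}. e m j * C m j))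
      - \<alpha> * (\<Sum>m\<in>{1..n}. d m * (f m * c m))
      = - (\<Sum>m\<in>{1..n}. d m * (\<alpha> * (\<Sum>j\<in>{1..n}. e m j * C m j) + \<alpha> * (f m * c m) - (\<Sum>k\<in>{1..n}. e k m * C k m)))"
      by (simp add: algebra_simps sum.distrib sum_subtractf sum_distrib_left)
    also have "\<dots> = 0" using key by simp
    finally show ?thesis .
  qed
  have mu0: "\<mu> 0 = l0 + d 0" using lam0 d_def by simp
  show ?thesis using Qmu_le expand1 expand2 zero P Qlam mu0
    by (simp add: algebra_simps)
qed

theorem lemma7:
  fixes M :: "'a measure" and A :: "'a set" and T :: "'a \<Rightarrow> 'a"
    and B :: "nat \<Rightarrow> 'a set" and n :: nat and \<alpha> :: real
    and x :: "nat \<Rightarrow> real" and l0 :: real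
  assumes sys: "open_dyn_system M A T"
    and Ainf_null: "Ainf T A \<in> null_sets M"
    and alpha: "0 < \<alpha>" "\<alpha> < 1"
    and B_meas: "\<forall>k\<in>{1..n}. B k \<in> sets M"
    and B_disj: "disjoint_family_on B {1..n}"
    and B_cover: "(\<Union>k\<in>{1..n}. B k) = A"
    and C_fin: "\<forall>k\<in>{1..n}. \<forall>j\<in>{1..n}. emeasure M (Chat_set M T A B n \<alpha> k j) < \<infinity>"
    and c_fin: "\<forall>k\<in>{1..n}. emeasure M (chat_set M T A B n \<alpha> k) < \<infinity>"
    and x_pos: "\<forall>i\<in>{1..n}. 0 < x i"
    and x_eq: "\<forall>i\<in>{1..n}. x i powr (1 + \<alpha>) =
        \<alpha> * ((\<Sum>j\<in>{1..n}. Chat M T A B n \<alpha> i j * x j) + chat M T A B n \<alpha> i)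
          / (\<Sum>k\<in>{1..n}. Chat M T A B n \<alpha> k i * x k powr (- \<alpha>))"
    and l0_eq: "exp (\<alpha> * l0 - 1) *
        (\<Sum>i\<in>{1..n}. \<Sum>j\<in>{1..n}. Chat M T A B n \<alpha> i j * x j * x i powr (- \<alpha>)) = \<alpha>"
  shows "solves_Dhat M T A B n \<alpha> (\<lambda>i. if i = 0 then l0 else ln (x i) - l0)"
  unfolding solves_Dhat_def
proof
  fix \<mu> show "Qhat M T A B n \<alpha> \<mu> \<le> Qhat M T A B n \<alpha> (\<lambda>i. if i = 0 then l0 else ln (x i) - l0)"
    by (rule core[where C="Chat M T A B n \<alpha>" and c="chat M T A B n \<alpha>" and lam="\<lambda>i. if i = 0 then l0 else ln (x i) - l0"])
       (fact | simp add: Chat_def chat_def Qhat_def)+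
qed

end
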